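(* For every integer $n\ge1$, $$\sum_{k=1}^n\frac{(-1)^k}{k^2\binom{2n}{k}}=H_{2n}^{(2)}+\frac32\sum_{k=1}^{n}\frac{(-1)^k}{k^2\binom{2k}{k}}-2\sum_{k=1}^{n}\frac{(-1)^k}{k\binom{2k}{k}}+4\sum_{k=1}^{n}\frac{(-1)^k}{(2k-1)\binom{2k}{k}}.$$
   Context: $H_m^{(2)}=\sum_{j=1}^m 1/j^2$. *)

theory Defs
  imports Complex_Main
begin

definition H2 :: "nat \<Rightarrow> real" where
  "H2 m = (\<Sum>j=1..m. 1 / (real j)^2)"

end

theory Submission
  imports Defs
begin


lemma inv_eq:
  fixes C a b :: real
  assumes "C * a = b" "C \<noteq> 0" "a \<noteq> 0"
  shows "1 / C = a / b"
  using assms by (auto simp: field_simps)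

lemma alg1:
  fixes x p q d e s :: real
  assumes "x \<noteq> 0" "p \<noteq> 0" "q \<noteq> 0" "d + e = q"
  shows "p/q*(1 + s*(d/(p*x))) + (-s)/x = p/q*(1 + (-s)*(e/(p*x)))"
proof -
  have e: "e = q - d" using assms(4) by simp
  show ?thesis using assms(1-3) unfolding e by (simp add: field_simps)
qed

lemma bin_a:
  assumes "k \<le> Suc N"
  shows "real (Suc N choose k) * (real N + 1 - real k) = (real N + 1) * real (N choose k)"
proof -
  have "(Suc N - k) * (Suc N choose k) = Suc N * (N choose k)"
    using binomial_absorb_comp[of "Suc N" k] by simp
  hence "real (Suc N - k) * real (Suc N choose k) = real (Suc N) * real (N choose k)"
    by (metis of_nat_mult)
  thus ?thesis using assms by (simp add: of_nat_diff algebra_simps del: binomial_Suc_n)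
qed

lemma bin_b:
  "real (Suc N choose Suc k) * (real k + 1) = (real N + 1) * real (N choose k)"
proof -
  have "real (Suc k) * real (Suc N choose Suc k) = real (Suc N) * real (N choose k)"
    by (metis of_nat_mult Suc_times_binomial)
  thus ?thesis by (simp add: algebra_simps del: binomial_Suc_Suc)
qed

lemma P_gen:
  assumes "m \<le> N"
  shows "(\<Sum>k=0..m. (-1)^k / real (N choose k))
     = (real N + 1) / (real N + 2) * (1 + (-1)^m / real (Suc N choose Suc m))"
  using assms
proof (induction m)
  case 0
  have a0: "p / (p + 1) * (1 + 1 / p) = 1" if "p > 0" for p :: real
  proof -
    have h: "p + 1 \<noteq> 0" "p \<noteq> 0" using that by auto
    have "1 + 1/p = (p+1)/p" using h by (simp add: field_simps)
    thus ?thesis using h by simp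
  qed
  have eq: "(real N + 1) / (real N + 2) * (1 + 1 / (real N + 1)) = 1"
  proof -
    have n2: "real N + 1 + 1 = real N + 2" by simp
    show ?thesis by (rule a0[of "real N + 1", unfolded n2]) simp
  qed
  have l: "(\<Sum>k=0..0. (-1)^k / real (N choose k)) = (1::real)" by simp
  have r: "(real N + 1) / (real N + 2) * (1 + (-1)^0 / real (Suc N choose Suc 0))
     = (real N + 1) / (real N + 2) * (1 + 1 / (real N + 1))" by simp
  show ?case unfolding l r eq ..
next
  case (Suc m)
  define x where "x = real (N choose Suc m)"
  have xpos: "x > 0" using Suc.prems by (simp add: x_def)
  have c1: "real (Suc N choose Suc m) \<noteq> 0" using Suc.prems by (simp del: binomial_Suc_Suc)
  have c2: "real (Suc N choose Suc (Suc m)) \<noteq> 0" using Suc.prems by (simp del: binomial_Suc_Suc)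
  have e1: "1 / real (Suc N choose Suc m) = (real N - real m) / ((real N + 1) * x)"
    using inv_eq[OF bin_a[of "Suc m" N] c1] Suc.prems xpos unfolding x_def by simp
  have e2: "1 / real (Suc N choose Suc (Suc m)) = (real m + 2) / ((real N + 1) * x)"
    using inv_eq[OF bin_b[of N "Suc m"] c2] xpos unfolding x_def by (simp add: add.commute)
  have "(\<Sum>k=0..Suc m. (-1)^k / real (N choose k))
       = (real N + 1) / (real N + 2) * (1 + (-1)^m * (1 / real (Suc N choose Suc m))) + (-1)^Suc m / x"
    using Suc by (simp add: x_def)
  also have "\<dots> = (real N + 1) / (real N + 2) * (1 + (-1)^Suc m * (1 / real (Suc N choose Suc (Suc m))))"
    unfolding e1 e2 
    using alg1[of x "real N + 1" "real N + 2" "real N - real m" "real m + 2" "(-1)^m"] xpos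
    by simp
  also have "\<dots> = (real N + 1) / (real N + 2) * (1 + (-1)^Suc m / real (Suc N choose Suc (Suc m)))"
    by simp
  finally show ?case .
qed

lemma alg2:
  fixes x p q r d e s t0 t1 m :: real
  assumes "x \<noteq> 0" "p \<noteq> 0" "q \<noteq> 0" "r \<noteq> 0" "t0*d + t1*e = q*r*(m+1)"
  shows "p/(q*r)*(s*t0*(d/(p*x)) - 1) + (-s)*(m+1)/x = p/(q*r)*((-s)*t1*(e/(p*x)) - 1)"
proof -
  have "p/(q*r)*(s*t0*(d/(p*x)) - 1) + (-s)*(m+1)/x - p/(q*r)*((-s)*t1*(e/(p*x)) - 1)
      = s/(q*r*x) * (t0*d + t1*e - q*r*(m+1))"
    using assms(1-4) by (simp add: field_simps)
  also have "\<dots> = 0" using assms(5) by simp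
  finally show ?thesis by simp
qed

lemma Q_gen:
  assumes "m \<le> N"
  shows "(\<Sum>k=0..m. (-1)^k * real k / real (N choose k))
     = (real N + 1) / ((real N + 2) * (real N + 3)) *
       ((-1)^m * ((real N + 2) * real m + (real N + 1)) * (1 / real (Suc N choose Suc m)) - 1)"
  using assms
proof (induction m)
  case 0
  have "real N + 1 \<noteq> 0" by simp
  then show ?case by simp
next
  case (Suc m)
  define x where "x = real (N choose Suc m)"
  have xpos: "x > 0" using Suc.prems by (simp add: x_def)
  have c1: "real (Suc N choose Suc m) \<noteq> 0" using Suc.prems by (simp del: binomial_Suc_Suc)
  have c2: "real (Suc N choose Suc (Suc m)) \<noteq> 0" using Suc.prems by (simp del: binomial_Suc_Suc)
  have e1: "1 / real (Suc N choose Suc m) = (real N - real m) / ((real N + 1) * x)"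
    using inv_eq[OF bin_a[of "Suc m" N] c1] Suc.prems xpos unfolding x_def by simp
  have e2: "1 / real (Suc N choose Suc (Suc m)) = (real m + 2) / ((real N + 1) * x)"
    using inv_eq[OF bin_b[of N "Suc m"] c2] xpos unfolding x_def by (simp add: add.commute)
  have H: "((real N + 2) * real m + (real N + 1)) * (real N - real m)
     + ((real N + 2) * (real m + 1) + (real N + 1)) * (real m + 2)
     = (real N + 2) * (real N + 3) * (real m + 1)"
    by (simp add: algebra_simps)
  have "(\<Sum>k=0..Suc m. (-1)^k * real k / real (N choose k))
       = (real N + 1) / ((real N + 2) * (real N + 3)) *
       ((-1)^m * ((real N + 2) * real m + (real N + 1)) * (1 / real (Suc N choose Suc m)) - 1)
        + (- ((-1)^m)) * (real m + 1) / x"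
    using Suc by (simp add: x_def)
  also have "\<dots> = (real N + 1) / ((real N + 2) * (real N + 3)) *
       ((- ((-1)^m)) * ((real N + 2) * (real m + 1) + (real N + 1)) * (1 / real (Suc N choose Suc (Suc m))) - 1)"
    unfolding e1 e2
    using alg2[of x "real N + 1" "real N + 2" "real N + 3" "(real N + 2) * real m + (real N + 1)"
       "real N - real m" "(real N + 2) * (real m + 1) + (real N + 1)" "real m + 2" "real m" "(-1)^m", OF _ _ _ _ H]
      xpos by simp
  also have "\<dots> = (real N + 1) / ((real N + 2) * (real N + 3)) *
       ((-1)^Suc m * ((real N + 2) * real (Suc m) + (real N + 1)) * (1 / real (Suc N choose Suc (Suc m))) - 1)"
    by simp
  finally show ?case .
qed



lemma algA0:
  fixes N u v w M a K c s :: real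
  assumes nz: "u \<noteq> 0" "v \<noteq> 0" "w \<noteq> 0" "c \<noteq> 0"
    and r: "u = 2*N+1" "v = 2*N+2" "w = 2*N+3" "M = N+1" "a = 4*N+3" "K = 2*N*N+4*N+1"
  shows "(-1/u + s/(u*c))
    + ((s*K/(2*w*c) - u/(v*w)) - a*(-1/v + s/(2*c)))/(u*v)
    - s/(2*u*c)
    = -1/w - s*M/(2*u*w*c)"
  using nz by (simp add: field_simps) (simp add: r algebra_simps power2_eq_square)


lemma algF0:
  fixes N u v M a c s :: real
  assumes nz: "u \<noteq> 0" "v \<noteq> 0" "M \<noteq> 0" "c \<noteq> 0"
    and r: "u = 2*N+1" "v = 2*N+2" "M = N+1" "a = 4*N+3"
  shows "((-1/v + s/(2*c)) - a*(-1/u + s/(u*c)))/(u*v) - s/(2*u*M*c)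
    = 1/(u*u) + 1/(v*v) - 3*s/(4*u*M*c) + s/(u*c) - 2*s*M/(u*u*c)"
  using nz by (simp add: field_simps) (simp add: r algebra_simps power2_eq_square)


definition fS :: "nat \<Rightarrow> real" where
  "fS n = (\<Sum>k=1..n. (-1)^k / ((real k)^2 * real ((2*n) choose k)))"
definition AS :: "nat \<Rightarrow> real" where
  "AS n = (\<Sum>k=1..n. (-1)^k / (real k * real ((2*n) choose k)))"
definition PS :: "nat \<Rightarrow> real" where
  "PS n = (\<Sum>k=1..n. (-1)^k / real ((2*n) choose k))"
definition QS :: "nat \<Rightarrow> real" where
  "QS n = (\<Sum>k=1..n. (-1)^k * real k / real ((2*n) choose k))"

lemma combine_inv:
  fixes C1 C2 y u v K :: real
  assumes "1/C2 = (v-K)/(v*C1)" "1/C1 = (u-K)/(u*y)"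
  shows "1/C2 = (v-K)*(u-K)/(v*u*y)"
proof -
  have "1/C2 = (v-K)/v * (1/C1)" using assms(1) by simp
  also have "\<dots> = (v-K)*(u-K)/(v*u*y)" using assms(2) by simp
  finally show ?thesis .
qed

lemma inv2:
  assumes "1 \<le> k" "k \<le> n"
  shows "1 / real ((2 * Suc n) choose k)
    = (2*real n+2 - real k)*(2*real n+1-real k)/((2*real n+2)*(2*real n+1)*real((2*n) choose k))"
proof -
  have eq: "2 * Suc n = Suc (Suc (2*n))" by simp
  have c1: "real (Suc (2*n) choose k) \<noteq> 0" using assms by simp
  have c2: "real (Suc (Suc (2*n)) choose k) \<noteq> 0" using assms by simp
  have k1: "2*real n + 1 - real k \<noteq> 0" "2*real n + 2 - real k \<noteq> 0" using assms by linarith+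
  have b1: "1 / real (Suc (2*n) choose k) = (2*real n+1-real k)/((2*real n+1)*real((2*n) choose k))"
    using inv_eq[OF bin_a[of k "2*n"] c1] assms k1 by (simp add: mult.commute)
  have b2: "1 / real (Suc (Suc (2*n)) choose k) = (2*real n+2-real k)/((2*real n+2)*real(Suc (2*n) choose k))"
    using inv_eq[OF bin_a[of k "Suc (2*n)"] c2] assms k1 by (simp add: ac_simps)
  show ?thesis unfolding eq using combine_inv[OF b2 b1] by simp
qed

lemma termF0:
  fixes t K y u v a N :: real
  assumes nz: "u \<noteq> 0" "v \<noteq> 0" "y \<noteq> 0" "K \<noteq> 0"
    and r: "u = 2*N+1" "v = 2*N+2" "a = 4*N+3"
  shows "t/(K^2) * ((v-K)*(u-K)/(v*u*y)) = t/(K^2*y) + (t/y - a*(t/(K*y)))/(u*v)"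
  using nz by (simp add: field_simps power2_eq_square) (simp add: r algebra_simps)

lemma termA0:
  fixes t K y u v a N :: real
  assumes nz: "u \<noteq> 0" "v \<noteq> 0" "y \<noteq> 0" "K \<noteq> 0"
    and r: "u = 2*N+1" "v = 2*N+2" "a = 4*N+3"
  shows "t/K * ((v-K)*(u-K)/(v*u*y)) = t/(K*y) + (t*K/y - a*(t/y))/(u*v)"
  using nz by (simp add: field_simps) (simp add: r algebra_simps)

lemma sum_split:
  fixes X Y Z :: "nat \<Rightarrow> real"
  shows "(\<Sum>k\<in>A. X k + (Y k - a*Z k)/D) = sum X A + (sum Y A - a * sum Z A)/D"
proof -
  have "(\<Sum>k\<in>A. (Y k - a*Z k)/D) = (\<Sum>k\<in>A. Y k - a*Z k)/D"
    by (rule sum_divide_distrib[symmetric])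
  also have "(\<Sum>k\<in>A. Y k - a*Z k) = sum Y A - a * sum Z A"
    by (simp add: sum_subtractf sum_distrib_left)
  finally show ?thesis by (simp add: sum.distrib)
qed

lemma fS_rec:
  "fS (Suc n) = fS n + (PS n - (4*real n+3) * AS n)/((2*real n+1)*(2*real n+2))
     + (-1)^Suc n / ((real (Suc n))^2 * real ((2 * Suc n) choose Suc n))"
proof -
  have "(\<Sum>k=1..n. (-1)^k / ((real k)^2 * real ((2 * Suc n) choose k)))
     = (\<Sum>k=1..n. (-1)^k / ((real k)^2 * real ((2*n) choose k))
        + ((-1)^k / real ((2*n) choose k) - (4*real n+3) * ((-1)^k / (real k * real ((2*n) choose k))))
          /((2*real n+1)*(2*real n+2)))"
  proof (rule sum.cong[OF refl])
    fix k assume k: "k \<in> {1..n}"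
    have y: "real ((2*n) choose k) \<noteq> 0" using k by simp
    have "(-1)^k / ((real k)^2 * real ((2 * Suc n) choose k))
       = (-1)^k / (real k)^2 * (1 / real ((2 * Suc n) choose k))" by simp
    also have "\<dots> = (-1)^k / (real k)^2 * ((2*real n+2 - real k)*(2*real n+1-real k)/((2*real n+2)*(2*real n+1)*real((2*n) choose k)))"
      using inv2[of k n] k by simp
    also have "\<dots> = (-1)^k / ((real k)^2 * real ((2*n) choose k))
        + ((-1)^k / real ((2*n) choose k) - (4*real n+3) * ((-1)^k / (real k * real ((2*n) choose k))))
          /((2*real n+1)*(2*real n+2))"
      by (rule termF0) (use y k in auto)
    finally show "(-1)^k / ((real k)^2 * real ((2 * Suc n) choose k))
       = (-1)^k / ((real k)^2 * real ((2*n) choose k))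
        + ((-1)^k / real ((2*n) choose k) - (4*real n+3) * ((-1)^k / (real k * real ((2*n) choose k))))
          /((2*real n+1)*(2*real n+2))" .
  qed
  also have "\<dots> = fS n + (PS n - (4*real n+3) * AS n)/((2*real n+1)*(2*real n+2))"
    unfolding fS_def PS_def AS_def
    by (rule sum_split)
  finally have e: "(\<Sum>k=1..n. (-1)^k / ((real k)^2 * real ((2 * Suc n) choose k)))
     = fS n + (PS n - (4*real n+3) * AS n)/((2*real n+1)*(2*real n+2))" .
  have "fS (Suc n) = (\<Sum>k=1..n. (-1)^k / ((real k)^2 * real ((2 * Suc n) choose k)))
     + (-1)^Suc n / ((real (Suc n))^2 * real ((2 * Suc n) choose Suc n))"
    unfolding fS_def by (simp del: binomial_Suc_Suc mult_Suc_right)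
  thus ?thesis using e by simp
qed

lemma AS_rec:
  "AS (Suc n) = AS n + (QS n - (4*real n+3) * PS n)/((2*real n+1)*(2*real n+2))
     + (-1)^Suc n / (real (Suc n) * real ((2 * Suc n) choose Suc n))"
proof -
  have "(\<Sum>k=1..n. (-1)^k / (real k * real ((2 * Suc n) choose k)))
     = (\<Sum>k=1..n. (-1)^k / (real k * real ((2*n) choose k))
        + ((-1)^k * real k / real ((2*n) choose k) - (4*real n+3) * ((-1)^k / real ((2*n) choose k)))
          /((2*real n+1)*(2*real n+2)))"
  proof (rule sum.cong[OF refl])
    fix k assume k: "k \<in> {1..n}"
    have y: "real ((2*n) choose k) \<noteq> 0" using k by simp
    have "(-1)^k / (real k * real ((2 * Suc n) choose k))
       = (-1)^k / real k * (1 / real ((2 * Suc n) choose k))" by simp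
    also have "\<dots> = (-1)^k / real k * ((2*real n+2 - real k)*(2*real n+1-real k)/((2*real n+2)*(2*real n+1)*real((2*n) choose k)))"
      using inv2[of k n] k by simp
    also have "\<dots> = (-1)^k / (real k * real ((2*n) choose k))
        + ((-1)^k * real k / real ((2*n) choose k) - (4*real n+3) * ((-1)^k / real ((2*n) choose k)))
          /((2*real n+1)*(2*real n+2))"
      by (rule termA0) (use y k in auto)
    finally show "(-1)^k / (real k * real ((2 * Suc n) choose k))
       = (-1)^k / (real k * real ((2*n) choose k))
        + ((-1)^k * real k / real ((2*n) choose k) - (4*real n+3) * ((-1)^k / real ((2*n) choose k)))
          /((2*real n+1)*(2*real n+2))" .
  qed
  also have "\<dots> = AS n + (QS n - (4*real n+3) * PS n)/((2*real n+1)*(2*real n+2))"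
    unfolding QS_def PS_def AS_def
    by (rule sum_split)
  finally have e: "(\<Sum>k=1..n. (-1)^k / (real k * real ((2 * Suc n) choose k)))
     = AS n + (QS n - (4*real n+3) * PS n)/((2*real n+1)*(2*real n+2))" .
  have "AS (Suc n) = (\<Sum>k=1..n. (-1)^k / (real k * real ((2 * Suc n) choose k)))
     + (-1)^Suc n / (real (Suc n) * real ((2 * Suc n) choose Suc n))"
    unfolding AS_def by (simp del: binomial_Suc_Suc mult_Suc_right)
  thus ?thesis using e by simp
qed



lemma cen1:
  "1 / real (Suc (2*n) choose Suc n) = (real n + 1)/((2 * real n + 1) * real ((2*n) choose n))"
proof -
  have c: "real (Suc (2*n) choose Suc n) \<noteq> 0" by (simp del: binomial_Suc_Suc)
  show ?thesis using inv_eq[OF bin_b[of "2*n" n] c] by simp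
qed

lemma cen2:
  "real ((2*Suc n) choose Suc n) = 2 * (2 * real n + 1) * real ((2*n) choose n) / (real n + 1)"
proof -
  have eq: "2 * Suc n = Suc (Suc (2*n))" by simp
  have b: "real (Suc (Suc (2*n)) choose Suc n) * (real n + 1) = (2 * real n + 2) * real (Suc (2*n) choose Suc n)"
    using bin_a[of "Suc n" "Suc (2*n)"] by (simp del: binomial_Suc_Suc add: algebra_simps)
  have c: "real (Suc (2*n) choose Suc n) = (2 * real n + 1) * real ((2*n) choose n) / (real n + 1)"
    using bin_b[of "2*n" n] by (simp del: binomial_Suc_Suc add: field_simps)
  have "real (Suc (Suc (2*n)) choose Suc n) = (2 * real n + 2) * real (Suc (2*n) choose Suc n) / (real n + 1)"
    using b by (simp del: binomial_Suc_Suc add: field_simps)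
  also have "\<dots> = (2 * real n + 2) / (real n + 1) * ((2 * real n + 1) * real ((2*n) choose n) / (real n + 1))"
    unfolding c by simp
  also have "(2 * real n + 2) / (real n + 1) = 2" by (simp add: field_simps)
  finally show ?thesis unfolding eq by (simp add: field_simps)
qed

lemma PS_closed:
  "PS n = -1/(2*real n+2) + (-1)^n/(2*real ((2*n) choose n))"
proof -
  have alg: "u/v*(1+s*(M/(u*c))) - 1 = -1/v + s/(2*c)"
    if "u \<noteq> 0" "v \<noteq> 0" "c \<noteq> 0" "u = 2*N+1" "v = 2*N+2" "M = N+1" for u v c s M N :: real
    using that(1-3) by (simp add: field_simps) (simp add: that(4-6) algebra_simps)
  have c: "real ((2*n) choose n) \<noteq> 0" by simp
  have "1 + PS n = (\<Sum>k=0..n. (-1)^k / real ((2*n) choose k))"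
    unfolding PS_def by (simp add: sum.atLeast_Suc_atMost)
  also have "\<dots> = (2*real n + 1) / (2*real n + 2) * (1 + (-1)^n * (1 / real (Suc (2*n) choose Suc n)))"
    using P_gen[of n "2*n"] by (simp del: binomial_Suc_Suc add: add.assoc)
  also have "\<dots> = (2*real n + 1) / (2*real n + 2) * (1 + (-1)^n * ((real n + 1)/((2 * real n + 1) * real ((2*n) choose n))))"
    unfolding cen1 ..
  finally have "PS n = (2*real n + 1) / (2*real n + 2) * (1 + (-1)^n * ((real n + 1)/((2 * real n + 1) * real ((2*n) choose n)))) - 1"
    by simp
  also have "\<dots> = -1/(2*real n+2) + (-1)^n/(2*real ((2*n) choose n))"
    by (rule alg) (use c in auto)
  finally show ?thesis .
qed

lemma QS_closed:
  "QS n = (-1)^n * (2*real n*real n+4*real n+1)/(2*(2*real n+3)*real ((2*n) choose n))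
     - (2*real n+1)/((2*real n+2)*(2*real n+3))"
proof -
  have alg: "u/(v*w)*(s*(v*N+u)*(M/(u*c)) - 1) = s*K/(2*w*c) - u/(v*w)"
    if "u \<noteq> 0" "v \<noteq> 0" "w \<noteq> 0" "c \<noteq> 0" "u = 2*N+1" "v = 2*N+2" "w = 2*N+3" "M = N+1"
       "K = 2*N*N+4*N+1" for u v w c s M N K :: real
    using that(1-4) by (simp add: field_simps) (simp add: that(5-9) algebra_simps)
  have c: "real ((2*n) choose n) \<noteq> 0" by simp
  have "QS n = (\<Sum>k=0..n. (-1)^k * real k / real ((2*n) choose k))"
    unfolding QS_def by (simp add: sum.atLeast_Suc_atMost)
  also have "\<dots> = (2*real n + 1) / ((2*real n + 2) * (2*real n + 3)) *
       ((-1)^n * ((2*real n + 2) * real n + (2*real n + 1)) * (1 / real (Suc (2*n) choose Suc n)) - 1)"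
    using Q_gen[of n "2*n"] by (simp del: binomial_Suc_Suc add: add.assoc)
  also have "\<dots> = (2*real n + 1) / ((2*real n + 2) * (2*real n + 3)) *
       ((-1)^n * ((2*real n + 2) * real n + (2*real n + 1)) * ((real n + 1)/((2 * real n + 1) * real ((2*n) choose n))) - 1)"
    unfolding cen1 ..
  also have "\<dots> = (-1)^n * (2*real n*real n+4*real n+1)/(2*(2*real n+3)*real ((2*n) choose n))
     - (2*real n+1)/((2*real n+2)*(2*real n+3))"
    by (rule alg) (use c in auto)
  finally show ?thesis .
qed


lemma last_gen:
  fixes s M u c D :: real
  assumes "M \<noteq> 0" "u \<noteq> 0" "c \<noteq> 0"
  shows "(-s)/(D*(2*u*c/M)) = -s*M/(2*u*c*D)"
  using assms by (cases "D = 0") (simp_all add: field_simps)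

lemma last_M:
  fixes s M u c :: real
  assumes "M \<noteq> 0" "u \<noteq> 0" "c \<noteq> 0"
  shows "(-s)/(M*(2*u*c/M)) = -s/(2*u*c)"
  using assms by (simp add: field_simps)

lemma last_M2:
  fixes s M u c :: real
  assumes "M \<noteq> 0" "u \<noteq> 0" "c \<noteq> 0"
  shows "(-s)/(M^2*(2*u*c/M)) = -s/(2*u*M*c)"
  using assms by (simp add: field_simps power2_eq_square)

lemma lastT:
  fixes s M u c w :: real
  assumes "M \<noteq> 0" "u \<noteq> 0" "c \<noteq> 0"
  shows "(-s)/(w*(2*u*c/M)) = -(s*M/(2*u*w*c))"
  using assms by (cases "w = 0") (simp_all add: field_simps)

lemma AS_closed:
  "AS n = -1/(2*real n+1) + (-1)^n/((2*real n+1)*real((2*n) choose n))"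
proof (induction n)
  case 0
  then show ?case by (simp add: AS_def)
next
  case (Suc n)
  define c where "c = real((2*n) choose n)"
  define s :: real where "s = (-1)^n"
  have cp: "c \<noteq> 0" by (simp add: c_def)
  have M: "real n + 1 \<noteq> 0" "2*real n + 1 \<noteq> 0" by linarith+
  have C2: "real ((2*Suc n) choose Suc n) = 2 * (2 * real n + 1) * c / (real n + 1)"
    unfolding c_def by (rule cen2)
  have last: "(-1)^Suc n / (real (Suc n) * real ((2 * Suc n) choose Suc n)) = - s/(2*(2*real n+1)*c)"
  proof -
    have "(-1)^Suc n / (real (Suc n) * real ((2 * Suc n) choose Suc n))
       = (-s)/((real n + 1)*(2*(2*real n+1)*c/(real n + 1)))"
      unfolding C2 s_def by (simp add: add.commute)
    also have "\<dots> = - s/(2*(2*real n+1)*c)" by (rule last_M[OF M(1) M(2) cp])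
    finally show ?thesis .
  qed
  have "AS (Suc n) = (-1/(2*real n+1) + s/((2*real n+1)*c))
    + ((s*(2*real n*real n+4*real n+1)/(2*(2*real n+3)*c) - (2*real n+1)/((2*real n+2)*(2*real n+3)))
       - (4*real n+3)*(-1/(2*real n+2) + s/(2*c)))/((2*real n+1)*(2*real n+2))
    - s/(2*(2*real n+1)*c)"
    unfolding AS_rec last Suc.IH QS_closed PS_closed c_def s_def by simp
  also have "\<dots> = -1/(2*real n+3) - s*(real n+1)/(2*(2*real n+1)*(2*real n+3)*c)"
    by (rule algA0) (use cp in auto)
  also have "\<dots> = -1/(2*real n+3) + (-s)/((2*real n+3)*(2*(2*real n+1)*c/(real n+1)))"
    by (subst lastT[OF M(1) M(2) cp]) simp
  also have "\<dots> = -1/(2*real (Suc n)+1) + (-1)^Suc n/((2*real (Suc n)+1)*real((2*Suc n) choose Suc n))"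
    unfolding C2 s_def by (simp add: add.commute)
  finally show ?case .
qed



definition Rf :: "nat \<Rightarrow> real" where
  "Rf n = H2 (2*n)
      + 3/2 * (\<Sum>k=1..n. (-1)^k / ((real k)^2 * real ((2*k) choose k)))
      - 2 * (\<Sum>k=1..n. (-1)^k / (real k * real ((2*k) choose k)))
      + 4 * (\<Sum>k=1..n. (-1)^k / ((2 * real k - 1) * real ((2*k) choose k)))"

lemma H2_step: "H2 (2*Suc n) = H2 (2*n) + 1/((2*real n+1)*(2*real n+1)) + 1/((2*real n+2)*(2*real n+2))"
proof -
  have eq: "2 * Suc n = Suc (Suc (2*n))" by simp
  show ?thesis unfolding eq H2_def by (simp add: power2_eq_square add_ac)
qed

lemma lin_comb:
  fixes r h h1 h2 a1 a2 a3 b1 b2 b3 t1 t2 t3 :: real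
  assumes "r = h + 3/2*b2 - 2*b1 + 4*b3" "3/2*t2 = -a1" "2*t1 = -a2" "4*t3 = -a3"
  shows "r + (h1 + h2 - a1 + a2 - a3) = h + h1 + h2 + 3/2*(b2 + t2) - 2*(b1 + t1) + 4*(b3 + t3)"
  using assms unfolding distrib_left by linarith

lemma main_step:
  "fS n = Rf n \<Longrightarrow> fS (Suc n) = Rf (Suc n)"
proof -
  assume IH: "fS n = Rf n"
  define c where "c = real((2*n) choose n)"
  define s :: real where "s = (-1)^n"
  have cp: "c \<noteq> 0" by (simp add: c_def)
  have M: "real n + 1 \<noteq> 0" "2*real n + 1 \<noteq> 0" by linarith+
  have C2: "real ((2*Suc n) choose Suc n) = 2 * (2 * real n + 1) * c / (real n + 1)"
    unfolding c_def by (rule cen2)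
  have l1: "(-1)^Suc n / (real (Suc n) * real ((2 * Suc n) choose Suc n)) = - s/(2*(2*real n+1)*c)"
  proof -
    have "(-1)^Suc n / (real (Suc n) * real ((2 * Suc n) choose Suc n))
       = (-s)/((real n + 1)*(2*(2*real n+1)*c/(real n + 1)))"
      unfolding C2 s_def by (simp add: add.commute)
    also have "\<dots> = - s/(2*(2*real n+1)*c)" by (rule last_M[OF M(1) M(2) cp])
    finally show ?thesis .
  qed
  have l2: "(-1)^Suc n / ((real (Suc n))^2 * real ((2 * Suc n) choose Suc n)) = - s/(2*(2*real n+1)*(real n+1)*c)"
  proof -
    have "(-1)^Suc n / ((real (Suc n))^2 * real ((2 * Suc n) choose Suc n))
       = (-s)/((real n + 1)^2*(2*(2*real n+1)*c/(real n + 1)))"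
      unfolding C2 s_def by (simp add: add.commute)
    also have "\<dots> = - s/(2*(2*real n+1)*(real n+1)*c)" by (rule last_M2[OF M(1) M(2) cp])
    finally show ?thesis .
  qed
  have l3: "(-1)^Suc n / ((2 * real (Suc n) - 1) * real ((2 * Suc n) choose Suc n))
     = -(s*(real n + 1)/(2*(2*real n+1)*(2*real n+1)*c))"
  proof -
    have "(-1)^Suc n / ((2 * real (Suc n) - 1) * real ((2 * Suc n) choose Suc n))
       = (-s)/((2*real n+1)*(2*(2*real n+1)*c/(real n + 1)))"
      unfolding C2 s_def by (simp add: add.commute)
    also have "\<dots> = -(s*(real n + 1)/(2*(2*real n+1)*(2*real n+1)*c))" by (rule lastT[OF M(1) M(2) cp])
    finally show ?thesis .
  qed
  have L: "fS (Suc n) = Rf n + ((((-1/(2*real n+2) + s/(2*c)) - (4*real n+3)*(-1/(2*real n+1) + s/((2*real n+1)*c)))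
       /((2*real n+1)*(2*real n+2)) - s/(2*(2*real n+1)*(real n+1)*c)))"
    unfolding fS_rec l2 IH[symmetric] PS_closed AS_closed c_def s_def by simp
  also have "\<dots> = Rf n + (1/((2*real n+1)*(2*real n+1)) + 1/((2*real n+2)*(2*real n+2))
       - 3*s/(4*(2*real n+1)*(real n+1)*c) + s/((2*real n+1)*c) - 2*s*(real n+1)/((2*real n+1)*(2*real n+1)*c))"
    by (subst algF0) (use cp in auto)
  also have "\<dots> = Rf (Suc n)"
  proof -
    have sS: "\<And>f. sum f {1..Suc n} = sum f {1..n} + f (Suc n)" by simp
    have p1: "3/2*(-s/(2*u*M*c)) = -(3*s/(4*u*M*c))" for u M :: real
      by (simp add: mult_ac)
    have p2: "2*(-s/(2*u*c)) = -(s/(u*c))" for u :: real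
      by (simp add: mult_ac)
    have p3: "4*(-(s*M/(2*u*u*c))) = -(2*s*M/(u*u*c))" for u M :: real
      by (simp add: mult_ac)
    show ?thesis
      unfolding Rf_def[of "Suc n"] H2_step sS l1 l2 l3
      by (rule lin_comb[OF Rf_def p1[of "2*real n+1" "real n+1"] p2[of "2*real n+1"]
        p3[of "real n+1" "2*real n+1"]])
  qed
  finally show ?thesis .
qed

lemma fS_Rf: "fS n = Rf n"
proof (induction n)
  case 0 show ?case by (simp add: fS_def Rf_def H2_def)
next
  case (Suc n) thus ?case by (rule main_step)
qed


theorem mainTheorem12:
  fixes n :: nat
  assumes "n \<ge> 1"
  shows "(\<Sum>k=1..n. (-1)^k / ((real k)^2 * real ((2*n) choose k)))
    = H2 (2*n)
      + 3/2 * (\<Sum>k=1..n. (-1)^k / ((real k)^2 * real ((2*k) choose k)))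
      - 2 * (\<Sum>k=1..n. (-1)^k / (real k * real ((2*k) choose k)))
      + 4 * (\<Sum>k=1..n. (-1)^k / ((2 * real k - 1) * real ((2*k) choose k)))"
  using fS_Rf[of n] unfolding fS_def Rf_def .

end
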